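(* Let $m\ge 1$, $n\ge 1$, and for each $i\in\{1,\dots,m\}$ let $f_i:\mathbb{R}^n\to\mathbb{R}$ be differentiable, with $\nabla f_i$ being $s_i$-Lipschitz for some $s_i>0$, and $f_i$ being $c_i$-strongly convex for some $c_i>0$, i.e. $(\nabla f_i(x)-\nabla f_i(y))^{\top}(x-y)\ge c_i\|x-y\|^2$ for all $x,y\in\mathbb{R}^n$. Let $\alpha_i>0$ with $\sum_{i=1}^m\alpha_i=1$, let $\beta_i>0$, let $\delta>0$, and let $\sigma_i$ satisfy $$0<\sigma_i<\frac{\sqrt{2c_i}}{\sqrt{2c_i}+\sqrt{\beta_i}}.$$ Let $z^*$ be the unique minimizer of $\sum_{i=1}^m\alpha_i f_i(z)$ over $z\in\mathbb{R}^n$, and set $u_i^*=z^*$ and $\lambda_i^*=\nabla f_i(z^* )$ for all $i$. Given initial points $u_i^0,\lambda_i^0\in\mathbb{R}^n$ ($i\in[m]$) and $z^0\in\mathbb{R}^n$, let the sequence $\{(u^k,\lambda^k,z^k)\}_{k\ge0}$ be generated as follows: for $k\ge 0$ and every $i\in[m]$, 1. $u_i^{k+1}\in\mathbb{R}^n$ is any point satisfying the inexactness criterion $\|e_i^k(u_i^{k+1})\|\le\sigma_i\|e_i^k(u_i^k)\|$, where $e_i^k(u_i)=\nabla f_i(u_i)-\lambda_i^k+\beta_i(u_i-z^k)$; 2. $\lambda_i^{k+1}=\lambda_i^k-\beta_i(u_i^{k+1}-z^k)$; 3. $z^{k+1}=\frac{1}{1+\delta}\hat z^{k+1}+\frac{\delta}{1+\delta}z^k$,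 where $\hat z^{k+1}=\frac{1}{\sum_{i=1}^m\alpha_i\beta_i}\sum_{i=1}^m\alpha_i(\beta_iu_i^{k+1}-\lambda_i^{k+1})$ (equivalently, $z^{k+1}$ minimizes $\sum_{i=1}^m\alpha_i\big(f_i(u_i^{k+1})-(\lambda_i^{k+1})^{\top}(u_i^{k+1}-z)+\frac{\beta_i}{2}\|u_i^{k+1}-z\|^2\big)+\frac{\delta}{2}\sum_{i=1}^m\alpha_i\beta_i\|z-z^k\|^2$ over $z\in\mathbb{R}^n$). Then for every $i\in[m]$, as $k\to\infty$: $\|e_i^k(u_i^{k+1})\|\to0$, $u_i^k\to u_i^*$, $\lambda_i^k\to\lambda_i^*$, and $z^k\to z^*$.
   Context: This is the convergence of the inexact federated ADMM (all clients participate in every round) applied to $\min_{u_i,z}\sum_i\alpha_if_i(u_i)$ subject to $u_i=z$ for all $i$, whose augmented Lagrangian is $L_{\alpha,\beta}(u,\lambda,z)=\sum_{i=1}^m\alpha_i\big(f_i(u_i)-\lambda_i^{\top}(u_i-z)+\frac{\beta_i}{2}\|u_i-z\|^2\big)$. The point $(u^*,\lambda^*,z^* )$ is the unique primal–dual solution of this constrained problem. $\|\cdot\|$ is the Euclidean norm and $[m]=\{1,\dots,m\}$. *)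

theory Defs
  imports "HOL-Analysis.Analysis"
begin

definition admm_err ::
  "(nat \<Rightarrow> 'a::real_vector \<Rightarrow> 'a) \<Rightarrow> (nat \<Rightarrow> real) \<Rightarrow> (nat \<Rightarrow> nat \<Rightarrow> 'a) \<Rightarrow> (nat \<Rightarrow> 'a)
     \<Rightarrow> nat \<Rightarrow> nat \<Rightarrow> 'a \<Rightarrow> 'a" where
  "admm_err grad beta lam z k i x = grad i x - lam k i + beta i *\<^sub>R (x - z k)"

end

theory Submission
  imports Defs
begin
lemma scalar_key:
  fixes r t rho X eps d e :: real
  assumes r: "r > 0" and t: "t > 0" and rho0: "0 < rho" and rho1: "rho < 1"
    and X: "X \<ge> 0" and eps: "eps \<ge> 0" and d: "d \<ge> 0" and e: "e \<ge> 0"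
    and eb: "e \<le> (rho*r/(r+t))*(eps + t^2*d)"
  shows "r^2*X^2 - 2*X*e + (1/(rho*r*t))*eps^2 + t^2*d^2 - (1/(rho*r*t))*e^2
         \<ge> r^2*(1-rho)*X^2 + ((1/rho - rho)/(r*t))*eps^2"
proof -
  have h1: "2*X*e \<le> rho*r^2*X^2 + e^2/(rho*r^2)"
  proof -
    have "0 \<le> (rho*r^2*X - e)^2/(rho*r^2)" using r rho0 by simp
    also have "\<dots> = rho*r^2*X^2 + e^2/(rho*r^2) - 2*X*e"
      using r rho0 by (simp add: field_simps power2_eq_square)
    finally show ?thesis by simp
  qed
  have h2: "e^2 \<le> (rho*r/(r+t))^2 * (eps + t^2*d)^2"
    using power_mono[OF eb e, of 2] by (simp add: power_mult_distrib power_divide)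
  have h3: "(eps + t^2*d)^2 \<le> (r+t)*(eps^2/r + t^3*d^2)"
  proof -
    have "0 \<le> (t*eps - r*t^2*d)^2/(r*t)" using r t by simp
    also have "\<dots> = (r+t)*(eps^2/r + t^3*d^2) - (eps + t^2*d)^2"
      using r t by (simp add: field_simps power2_eq_square power3_eq_cube)
    finally show ?thesis by simp
  qed
  have h4: "e^2 \<le> (rho*r/(r+t))^2 * ((r+t)*(eps^2/r + t^3*d^2))"
    using h2 h3 by (meson mult_left_mono order_trans zero_le_power2)
  have h5: "(1/(rho*r*t) + 1/(rho*r^2)) * e^2 \<le> rho*eps^2/(r*t) + rho*t^2*d^2"
  proof -
    have pos: "0 \<le> 1/(rho*r*t) + 1/(rho*r^2)" using r t rho0 by simp
    have "(1/(rho*r*t) + 1/(rho*r^2)) * e^2 \<le> (1/(rho*r*t) + 1/(rho*r^2)) * ((rho*r/(r+t))^2 * ((r+t)*(eps^2/r + t^3*d^2)))"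
      using mult_left_mono[OF h4 pos] .
    also have "\<dots> = ((1/(rho*r*t) + 1/(rho*r^2)) * (rho*r/(r+t))^2 * (r+t)) * (eps^2/r + t^3*d^2)"
      by (simp only: mult.assoc)
    also have "(1/(rho*r*t) + 1/(rho*r^2)) * (rho*r/(r+t))^2 * (r+t) = rho/t"
    proof -
      have a: "1/(rho*r*t) + 1/(rho*r^2) = (r+t)/(rho*r^2*t)"
        using r t rho0 by (simp add: field_simps power2_eq_square)
      have b: "(rho*r/(r+t))^2 = rho^2*r^2/(r+t)^2" by (simp add: power_divide power_mult_distrib)
      have rt: "r + t > 0" using r t by simp
      have g: "\<And>q. q > 0 \<Longrightarrow> q/(rho*r^2*t) * (rho^2*r^2/q^2) * q = rho/t"
        using r t rho0 by (simp add: field_simps power2_eq_square)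
      show ?thesis unfolding a b using g[OF rt] .

    qed
    also have "rho/t * (eps^2/r + t^3*d^2) = rho*eps^2/(r*t) + rho*t^2*d^2"
      using r t rho0 by (simp add: field_simps power2_eq_square power3_eq_cube)
    finally show ?thesis .
  qed
  have h6: "rho*t^2*d^2 \<le> t^2*d^2" proof -
    have "0 \<le> t^2*d^2" by simp
    then have "rho*(t^2*d^2) \<le> 1*(t^2*d^2)" using rho1 by (intro mult_right_mono) auto
    then show ?thesis by (simp add: mult.assoc)
  qed
  have h7: "e^2/(rho*r^2) + (1/(rho*r*t))*e^2 = (1/(rho*r*t) + 1/(rho*r^2)) * e^2"
    by (simp add: field_simps)
  have h8: "(1/(rho*r*t))*eps^2 - rho*eps^2/(r*t) = ((1/rho - rho)/(r*t))*eps^2"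
    using r t rho0 by (simp add: field_simps)
  have h9: "r^2*(1-rho)*X^2 = r^2*X^2 - rho*r^2*X^2" by (simp add: algebra_simps)
  have h5': "e^2/(rho*r^2) + (1/(rho*r*t))*e^2 \<le> rho*eps^2/(r*t) + rho*t^2*d^2"
    using h5 h7 by simp
  show ?thesis using h1 h5' h6 h8 h9 by (smt (verit))
qed
lemma per_i_identity:
  fixes x y y' w w' :: "'a::real_inner" and b :: real
  assumes b: "b \<noteq> 0" and R1: "y' = y - b *\<^sub>R (x - w)"
  shows "(1/b) * (norm (b *\<^sub>R w + y))^2 - (1/b) * (norm (b *\<^sub>R w' + y'))^2
       = 2 * (x \<bullet> y') + b * (norm (x - w'))^2 + 2 * (w' \<bullet> (b *\<^sub>R x - y' - b *\<^sub>R w'))"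
proof -
  have e: "b *\<^sub>R w + y = y' + b *\<^sub>R x" using R1 by (simp add: algebra_simps)
  show ?thesis unfolding e power2_norm_eq_inner
    using b by (simp add: inner_add_left inner_add_right inner_diff_left inner_diff_right
        inner_commute field_simps power2_eq_square)
qed

lemma V_identity:
  fixes x y y' :: "nat \<Rightarrow> 'a::real_inner" and w w' :: 'a
    and alpha beta :: "nat \<Rightarrow> real" and delta B :: real
  assumes bnz: "\<And>i. i < m \<Longrightarrow> beta i \<noteq> 0"
    and R1: "\<And>i. i < m \<Longrightarrow> y' i = y i - beta i *\<^sub>R (x i - w)"
    and R2: "(\<Sum>i<m. alpha i *\<^sub>R (beta i *\<^sub>R x i - y' i)) = ((1+delta)*B) *\<^sub>R w' - (delta*B) *\<^sub>R w"
    and Bdef: "B = (\<Sum>i<m. alpha i * beta i)"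
  shows "((\<Sum>i<m. alpha i * ((1/beta i) * (norm (beta i *\<^sub>R w + y i))^2)) + delta*B*(norm w)^2)
       - ((\<Sum>i<m. alpha i * ((1/beta i) * (norm (beta i *\<^sub>R w' + y' i))^2)) + delta*B*(norm w')^2)
       = (\<Sum>i<m. alpha i * (2*(x i \<bullet> y' i) + beta i * (norm (x i - w'))^2)) + delta*B*(norm (w' - w))^2"
proof -
  have s1: "(\<Sum>i<m. alpha i * ((1/beta i) * (norm (beta i *\<^sub>R w + y i))^2))
          - (\<Sum>i<m. alpha i * ((1/beta i) * (norm (beta i *\<^sub>R w' + y' i))^2))
        = (\<Sum>i<m. alpha i * (2*(x i \<bullet> y' i) + beta i * (norm (x i - w'))^2))
          + 2 * (\<Sum>i<m. alpha i * (w' \<bullet> (beta i *\<^sub>R x i - y' i - beta i *\<^sub>R w')))"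
  proof -
    have "(\<Sum>i<m. alpha i * ((1/beta i) * (norm (beta i *\<^sub>R w + y i))^2))
          - (\<Sum>i<m. alpha i * ((1/beta i) * (norm (beta i *\<^sub>R w' + y' i))^2))
        = (\<Sum>i<m. alpha i * ((1/beta i) * (norm (beta i *\<^sub>R w + y i))^2 - (1/beta i) * (norm (beta i *\<^sub>R w' + y' i))^2))"
      by (simp add: sum_subtractf right_diff_distrib)
    also have "\<dots> = (\<Sum>i<m. alpha i * (2*(x i \<bullet> y' i) + beta i * (norm (x i - w'))^2 + 2 * (w' \<bullet> (beta i *\<^sub>R x i - y' i - beta i *\<^sub>R w'))))"
    proof (rule sum.cong[OF refl])
      fix i assume "i \<in> {..<m}"
      then have i: "i < m" by simp
      show "alpha i * ((1/beta i) * (norm (beta i *\<^sub>R w + y i))^2 - (1/beta i) * (norm (beta i *\<^sub>R w' + y' i))^2)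
          = alpha i * (2*(x i \<bullet> y' i) + beta i * (norm (x i - w'))^2 + 2 * (w' \<bullet> (beta i *\<^sub>R x i - y' i - beta i *\<^sub>R w')))"
        using per_i_identity[OF bnz[OF i] R1[OF i]] by simp
    qed
    also have "\<dots> = (\<Sum>i<m. alpha i * (2*(x i \<bullet> y' i) + beta i * (norm (x i - w'))^2))
          + 2 * (\<Sum>i<m. alpha i * (w' \<bullet> (beta i *\<^sub>R x i - y' i - beta i *\<^sub>R w')))"
      by (simp add: distrib_left sum.distrib sum_distrib_left mult.left_commute)
    finally show ?thesis .
  qed
  have s2: "(\<Sum>i<m. alpha i * (w' \<bullet> (beta i *\<^sub>R x i - y' i - beta i *\<^sub>R w')))
        = w' \<bullet> ((\<Sum>i<m. alpha i *\<^sub>R (beta i *\<^sub>R x i - y' i)) - B *\<^sub>R w')"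
  proof -
    have "(\<Sum>i<m. alpha i * (w' \<bullet> (beta i *\<^sub>R x i - y' i - beta i *\<^sub>R w')))
        = w' \<bullet> (\<Sum>i<m. alpha i *\<^sub>R (beta i *\<^sub>R x i - y' i) - (alpha i * beta i) *\<^sub>R w')"
      by (simp add: inner_sum_right inner_diff_right algebra_simps)
    also have "\<dots> = w' \<bullet> ((\<Sum>i<m. alpha i *\<^sub>R (beta i *\<^sub>R x i - y' i)) - B *\<^sub>R w')"
      by (simp add: sum_subtractf Bdef scaleR_sum_left)
    finally show ?thesis .
  qed
  have s3: "w' \<bullet> ((\<Sum>i<m. alpha i *\<^sub>R (beta i *\<^sub>R x i - y' i)) - B *\<^sub>R w')
      = delta*B*(w' \<bullet> w' - w' \<bullet> w)"
    unfolding R2 by (simp add: inner_diff_right algebra_simps)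
  have s4: "delta*B*(norm w)^2 - delta*B*(norm w')^2 + 2*(delta*B*(w' \<bullet> w' - w' \<bullet> w)) = delta*B*(norm (w' - w))^2"
    unfolding power2_norm_eq_inner by (simp add: inner_diff_left inner_diff_right inner_commute algebra_simps)
  show ?thesis using s1 s2 s3 s4 by linarith
qed

lemma sq_to_zero:
  fixes v :: "nat \<Rightarrow> 'a::real_normed_vector"
  assumes w: "w > 0" and le: "\<And>k. w * (norm (v k))^2 \<le> D k" and D: "D \<longlonglongrightarrow> 0"
  shows "v \<longlonglongrightarrow> 0"
proof (rule Lim_null_comparison)
  show "\<forall>\<^sub>F k in sequentially. norm (v k) \<le> sqrt (D k / w)"
  proof (intro always_eventually allI)
    fix k
    have "(norm (v k))^2 \<le> D k / w" using le[of k] w by (simp add: field_simps mult.commute)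
    then have "sqrt ((norm (v k))^2) \<le> sqrt (D k / w)" by (rule real_sqrt_le_mono)
    then show "norm (v k) \<le> sqrt (D k / w)" by simp
  qed
  have "(\<lambda>k. D k / w) \<longlonglongrightarrow> 0 / w" by (intro tendsto_divide D tendsto_const) (use w in simp)
  then have "(\<lambda>k. sqrt (D k / w)) \<longlonglongrightarrow> sqrt (0 / w)" by (rule tendsto_real_sqrt)
  then show "(\<lambda>k. sqrt (D k / w)) \<longlonglongrightarrow> 0" by simp
qed

lemma lyap_to_zero:
  fixes Phi D :: "nat \<Rightarrow> real"
  assumes dec: "\<And>k. Phi (Suc k) + D k \<le> Phi k" and P: "\<And>k. 0 \<le> Phi k" and Dn: "\<And>k. 0 \<le> D k"
  shows "D \<longlonglongrightarrow> 0"
proof -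
  have tel: "(\<Sum>k<N. D k) + Phi N \<le> Phi 0" for N
  proof (induction N)
    case 0 then show ?case by simp
  next
    case (Suc N) then show ?case using dec[of N] by simp
  qed
  have "(\<Sum>k<N. D k) \<le> Phi 0" for N using tel[of N] P[of N] by linarith
  then have "summable D" by (intro summableI_nonneg_bounded[where x="Phi 0"]) (use Dn in auto)
  then show ?thesis by (rule summable_LIMSEQ_zero)
qed

theorem theorem1:
  fixes m :: nat
    and f :: "nat \<Rightarrow> real ^ 'n \<Rightarrow> real"
    and grad :: "nat \<Rightarrow> real ^ 'n \<Rightarrow> real ^ 'n"
    and s c alpha beta sigma :: "nat \<Rightarrow> real"
    and delta :: real
    and zs :: "real ^ 'n"
    and u lam :: "nat \<Rightarrow> nat \<Rightarrow> real ^ 'n"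
    and z :: "nat \<Rightarrow> real ^ 'n"
  assumes m_pos: "m \<ge> 1"
    and deriv: "\<And>i x. i < m \<Longrightarrow> (f i has_derivative (\<lambda>h. grad i x \<bullet> h)) (at x)"
    and s_pos: "\<And>i. i < m \<Longrightarrow> s i > 0"
    and lipschitz: "\<And>i x y. i < m \<Longrightarrow> norm (grad i x - grad i y) \<le> s i * norm (x - y)"
    and c_pos: "\<And>i. i < m \<Longrightarrow> c i > 0"
    and strong_conv: "\<And>i x y. i < m \<Longrightarrow> (grad i x - grad i y) \<bullet> (x - y) \<ge> c i * (norm (x - y))\<^sup>2"
    and alpha_pos: "\<And>i. i < m \<Longrightarrow> alpha i > 0"
    and alpha_sum: "(\<Sum>i<m. alpha i) = 1"
    and beta_pos: "\<And>i. i < m \<Longrightarrow> beta i > 0"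
    and delta_pos: "delta > 0"
    and sigma_pos: "\<And>i. i < m \<Longrightarrow> sigma i > 0"
    and sigma_bound: "\<And>i. i < m \<Longrightarrow>
          sigma i < sqrt (2 * c i) / (sqrt (2 * c i) + sqrt (beta i))"
    and zs_min: "\<And>y. (\<Sum>i<m. alpha i * f i zs) \<le> (\<Sum>i<m. alpha i * f i y)"
    and inexact: "\<And>k i. i < m \<Longrightarrow>
          norm (admm_err grad beta lam z k i (u (Suc k) i))
            \<le> sigma i * norm (admm_err grad beta lam z k i (u k i))"
    and lam_upd: "\<And>k i. i < m \<Longrightarrow>
          lam (Suc k) i = lam k i - beta i *\<^sub>R (u (Suc k) i - z k)"
    and z_upd: "\<And>k. z (Suc k) =
          (1 / (1 + delta)) *\<^sub>R
            ((1 / (\<Sum>i<m. alpha i * beta i)) *\<^sub>R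
               (\<Sum>i<m. alpha i *\<^sub>R (beta i *\<^sub>R u (Suc k) i - lam (Suc k) i)))
          + (delta / (1 + delta)) *\<^sub>R z k"
  shows "\<forall>i<m.
           (\<lambda>k. norm (admm_err grad beta lam z k i (u (Suc k) i))) \<longlonglongrightarrow> 0
         \<and> (\<lambda>k. u k i) \<longlonglongrightarrow> zs
         \<and> (\<lambda>k. lam k i) \<longlonglongrightarrow> grad i zs
         \<and> z \<longlonglongrightarrow> zs"
proof -
  define g where "g i = grad i zs" for i
  define B where "B = (\<Sum>i<m. alpha i * beta i)"
  define E where "E k i = grad i (u k i) - lam k i" for k i
  define r where "r i = sqrt (2 * c i)" for i
  define t where "t i = sqrt (beta i)" for i
  define rho where "rho i = sigma i * (r i + t i) / r i" for i
  define a where "a i = 1 / (rho i * r i * t i)" for i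
  define kap where "kap i = (1 / rho i - rho i) / (r i * t i)" for i
  define V where "V k = (\<Sum>i<m. alpha i * ((1/beta i) * (norm (beta i *\<^sub>R (z k - zs) + (lam k i - g i)))^2))
      + delta*B*(norm (z k - zs))^2" for k
  define Phi where "Phi k = V k + (\<Sum>i<m. alpha i * (a i * (norm (E k i))^2 + beta i * (norm (u k i - z k))^2))" for k
  define D where "D k = (\<Sum>i<m. alpha i * (r i^2 * (1 - rho i) * (norm (u (Suc k) i - zs))^2 + kap i * (norm (E k i))^2))
      + delta*B*(norm (z (Suc k) - z k))^2" for k
  have ne: "{..<m} \<noteq> {}" using m_pos by (simp add: lessThan_empty_iff)
  have Bpos: "B > 0" unfolding B_def
    by (rule sum_pos) (use ne alpha_pos beta_pos in auto)
  have gsum: "(\<Sum>i<m. alpha i *\<^sub>R g i) = 0"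
  proof -
    let ?F = "\<lambda>y. \<Sum>i<m. alpha i * f i y"
    have "(?F has_derivative (\<lambda>h. \<Sum>i<m. alpha i * (grad i zs \<bullet> h))) (at zs)"
      by (intro has_derivative_sum has_derivative_mult_right) (use deriv in auto)
    moreover have "eventually (\<lambda>y. ?F zs \<le> ?F y) (at zs)" using zs_min by simp
    ultimately have "(\<lambda>h. \<Sum>i<m. alpha i * (grad i zs \<bullet> h)) = (\<lambda>h. 0)"
      by (rule has_derivative_local_min)
    then have "(\<Sum>i<m. alpha i * (grad i zs \<bullet> (\<Sum>i<m. alpha i *\<^sub>R g i))) = 0" by metis
    then have "(\<Sum>i<m. alpha i *\<^sub>R g i) \<bullet> (\<Sum>i<m. alpha i *\<^sub>R g i) = 0"
      by (simp add: inner_sum_left g_def)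
    then show ?thesis by simp
  qed
  have rpos: "r i > 0" and tpos: "t i > 0" and r2: "(r i)^2 = 2 * c i" and t2: "(t i)^2 = beta i"
    and rho0: "rho i > 0" and rho1: "rho i < 1" and sig: "sigma i = rho i * r i / (r i + t i)"
    if i: "i < m" for i
  proof -
    show rp: "r i > 0" unfolding r_def using c_pos[OF i] by simp
    show tp: "t i > 0" unfolding t_def using beta_pos[OF i] by simp
    show "(r i)^2 = 2 * c i" unfolding r_def using c_pos[OF i] by simp
    show "(t i)^2 = beta i" unfolding t_def using beta_pos[OF i] by simp
    show "rho i > 0" unfolding rho_def using rp tp sigma_pos[OF i] by simp
    have "sigma i < r i / (r i + t i)" using sigma_bound[OF i] unfolding r_def t_def .
    then have "sigma i * (r i + t i) < r i" using rp tp by (simp add: field_simps)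
    then show "rho i < 1" unfolding rho_def using rp by simp
    have rtp: "r i + t i \<noteq> 0" using rp tp by simp
    have gen: "\<And>p q. p \<noteq> 0 \<Longrightarrow> q \<noteq> 0 \<Longrightarrow> sigma i * q / p * p / q = sigma i" by simp
    show "sigma i = rho i * r i / (r i + t i)" unfolding rho_def using gen[of "r i" "r i + t i"] rp rtp by simp
  qed
  have key: "Phi (Suc k) + D k \<le> Phi k" for k
  proof -
    define S where "S = (\<Sum>i<m. alpha i *\<^sub>R (beta i *\<^sub>R u (Suc k) i - lam (Suc k) i))"
    have zS: "((1+delta)*B) *\<^sub>R z (Suc k) = S + (delta*B) *\<^sub>R z k"
    proof -
      have "((1+delta)*B) *\<^sub>R z (Suc k) = ((1+delta)*B) *\<^sub>R ((1/(1+delta)) *\<^sub>R ((1/B) *\<^sub>R S) + (delta/(1+delta)) *\<^sub>R z k)"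
        using z_upd[of k] unfolding S_def B_def by simp
      also have "\<dots> = S + (delta*B) *\<^sub>R z k" using delta_pos Bpos by (simp add: scaleR_add_right)
      finally show ?thesis .
    qed
    have R2: "(\<Sum>i<m. alpha i *\<^sub>R (beta i *\<^sub>R (u (Suc k) i - zs) - (lam (Suc k) i - g i)))
        = ((1+delta)*B) *\<^sub>R (z (Suc k) - zs) - (delta*B) *\<^sub>R (z k - zs)"
    proof -
      have "(\<Sum>i<m. alpha i *\<^sub>R (beta i *\<^sub>R (u (Suc k) i - zs) - (lam (Suc k) i - g i)))
          = (\<Sum>i<m. alpha i *\<^sub>R (beta i *\<^sub>R u (Suc k) i - lam (Suc k) i) - (alpha i * beta i) *\<^sub>R zs + alpha i *\<^sub>R g i)"
        by (simp add: algebra_simps)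
      also have "\<dots> = S - B *\<^sub>R zs + (\<Sum>i<m. alpha i *\<^sub>R g i)"
        by (simp add: sum.distrib sum_subtractf S_def B_def scaleR_sum_left)
      also have "\<dots> = S - B *\<^sub>R zs" using gsum by simp
      also have "\<dots> = ((1+delta)*B) *\<^sub>R (z (Suc k) - zs) - (delta*B) *\<^sub>R (z k - zs)"
        using zS by (simp add: algebra_simps)
      finally show ?thesis .
    qed
    have Vid0: "((\<Sum>i<m. alpha i * ((1/beta i) * (norm (beta i *\<^sub>R (z k - zs) + (lam k i - g i)))^2)) + delta*B*(norm (z k - zs))^2)
       - ((\<Sum>i<m. alpha i * ((1/beta i) * (norm (beta i *\<^sub>R (z (Suc k) - zs) + (lam (Suc k) i - g i)))^2)) + delta*B*(norm (z (Suc k) - zs))^2)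
       = (\<Sum>i<m. alpha i * (2*((u (Suc k) i - zs) \<bullet> (lam (Suc k) i - g i)) + beta i * (norm ((u (Suc k) i - zs) - (z (Suc k) - zs)))^2))
         + delta*B*(norm ((z (Suc k) - zs) - (z k - zs)))^2"
    proof (rule V_identity[where x="\<lambda>i. u (Suc k) i - zs" and y="\<lambda>i. lam k i - g i"
            and y'="\<lambda>i. lam (Suc k) i - g i"])
      show "\<And>i. i < m \<Longrightarrow> beta i \<noteq> 0" using beta_pos by (metis less_irrefl)
      show "\<And>i. i < m \<Longrightarrow> lam (Suc k) i - g i = lam k i - g i - beta i *\<^sub>R (u (Suc k) i - zs - (z k - zs))"
        using lam_upd by simp
      show "(\<Sum>i<m. alpha i *\<^sub>R (beta i *\<^sub>R (u (Suc k) i - zs) - (lam (Suc k) i - g i)))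
        = ((1+delta)*B) *\<^sub>R (z (Suc k) - zs) - (delta*B) *\<^sub>R (z k - zs)" by (rule R2)
      show "B = (\<Sum>i<m. alpha i * beta i)" by (rule B_def)
    qed
    have Vid: "V k - V (Suc k) = (\<Sum>i<m. alpha i * (2*((u (Suc k) i - zs) \<bullet> (lam (Suc k) i - g i)) + beta i * (norm (u (Suc k) i - z (Suc k)))^2))
         + delta*B*(norm (z (Suc k) - z k))^2"
      using Vid0 unfolding V_def by simp
    have per: "r i^2*(1-rho i)*(norm (u (Suc k) i - zs))^2 + kap i * (norm (E k i))^2
       \<le> 2*((u (Suc k) i - zs) \<bullet> (lam (Suc k) i - g i)) + a i * (norm (E k i))^2 + beta i * (norm (u k i - z k))^2 - a i * (norm (E (Suc k) i))^2"
      if i: "i < m" for i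
    proof -
      let ?x = "u (Suc k) i - zs"
      have y': "lam (Suc k) i - g i = (grad i (u (Suc k) i) - grad i zs) - E (Suc k) i" by (simp add: E_def g_def)
      have sc: "c i * (norm ?x)^2 \<le> ?x \<bullet> (grad i (u (Suc k) i) - grad i zs)"
        using strong_conv[OF i, of "u (Suc k) i" zs] by (simp add: inner_commute)
      have cs: "?x \<bullet> E (Suc k) i \<le> norm ?x * norm (E (Suc k) i)" by (rule norm_cauchy_schwarz)
      have lb: "2*c i*(norm ?x)^2 - 2*norm ?x*norm (E (Suc k) i) \<le> 2*(?x \<bullet> (lam (Suc k) i - g i))"
      proof -
        have "?x \<bullet> (lam (Suc k) i - g i) = ?x \<bullet> (grad i (u (Suc k) i) - grad i zs) - ?x \<bullet> E (Suc k) i"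
          unfolding y' by (simp only: inner_diff_right)
        then show ?thesis using sc cs by linarith
      qed
      have err1: "admm_err grad beta lam z k i (u (Suc k) i) = E (Suc k) i"
        unfolding admm_err_def E_def using lam_upd[OF i, of k] by (simp add: algebra_simps)
      have err0: "admm_err grad beta lam z k i (u k i) = E k i + beta i *\<^sub>R (u k i - z k)"
        unfolding admm_err_def E_def by (simp add: algebra_simps)
      have eb: "norm (E (Suc k) i) \<le> (rho i * r i/(r i + t i)) * (norm (E k i) + (t i)^2 * norm (u k i - z k))"
      proof -
        have "norm (E (Suc k) i) \<le> sigma i * norm (E k i + beta i *\<^sub>R (u k i - z k))"
          using inexact[OF i, of k] err1 err0 by simp
        also have "\<dots> \<le> sigma i * (norm (E k i) + beta i * norm (u k i - z k))"
          using sigma_pos[OF i] beta_pos[OF i] norm_triangle_ineq[of "E k i" "beta i *\<^sub>R (u k i - z k)"]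
          by (intro mult_left_mono) auto
        finally show ?thesis using sig[OF i] t2[OF i] by simp
      qed
      have sk: "r i^2*(norm ?x)^2 - 2*(norm ?x)*norm (E (Suc k) i) + (1/(rho i*r i*t i))*(norm (E k i))^2
          + t i^2*(norm (u k i - z k))^2 - (1/(rho i*r i*t i))*(norm (E (Suc k) i))^2
         \<ge> r i^2*(1-rho i)*(norm ?x)^2 + ((1/rho i - rho i)/(r i*t i))*(norm (E k i))^2"
        by (rule scalar_key[OF rpos[OF i] tpos[OF i] rho0[OF i] rho1[OF i] norm_ge_zero norm_ge_zero norm_ge_zero norm_ge_zero eb])
      have sk2: "2*c i*(norm ?x)^2 - 2*(norm ?x)*norm (E (Suc k) i) + a i*(norm (E k i))^2
          + beta i*(norm (u k i - z k))^2 - a i*(norm (E (Suc k) i))^2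
         \<ge> r i^2*(1-rho i)*(norm ?x)^2 + kap i*(norm (E k i))^2"
        using sk unfolding a_def[symmetric] kap_def[symmetric] r2[OF i] t2[OF i] .
      show ?thesis using sk2 lb by linarith
    qed
    have "D k \<le> (\<Sum>i<m. alpha i * (2*((u (Suc k) i - zs) \<bullet> (lam (Suc k) i - g i)) + a i * (norm (E k i))^2 + beta i * (norm (u k i - z k))^2 - a i * (norm (E (Suc k) i))^2))
         + delta*B*(norm (z (Suc k) - z k))^2"
      unfolding D_def
      by (intro add_right_mono sum_mono mult_left_mono) (use per alpha_pos in \<open>auto intro: less_imp_le\<close>)
    also have "(\<Sum>i<m. alpha i * (2*((u (Suc k) i - zs) \<bullet> (lam (Suc k) i - g i)) + a i * (norm (E k i))^2 + beta i * (norm (u k i - z k))^2 - a i * (norm (E (Suc k) i))^2))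
       = (\<Sum>i<m. alpha i * (2*((u (Suc k) i - zs) \<bullet> (lam (Suc k) i - g i)) + beta i * (norm (u (Suc k) i - z (Suc k)))^2))
         + (\<Sum>i<m. alpha i * (a i * (norm (E k i))^2 + beta i * (norm (u k i - z k))^2))
         - (\<Sum>i<m. alpha i * (a i * (norm (E (Suc k) i))^2 + beta i * (norm (u (Suc k) i - z (Suc k)))^2))"
    proof -
      have gen: "\<And>(A::nat\<Rightarrow>real) P Q. (\<Sum>i<m. alpha i * (A i + P i - Q i)) = (\<Sum>i<m. alpha i * A i) + (\<Sum>i<m. alpha i * P i) - (\<Sum>i<m. alpha i * Q i)"
        by (simp add: sum.distrib sum_subtractf distrib_left right_diff_distrib)
      show ?thesis
        by (subst gen[symmetric], rule sum.cong[OF refl]) (simp add: algebra_simps)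
    qed
    finally show ?thesis using Vid unfolding Phi_def by linarith
  qed
  have a_nn: "0 \<le> a i" if i: "i < m" for i
    unfolding a_def using rho0[OF i] rpos[OF i] tpos[OF i] by simp
  have kap_nn: "0 \<le> kap i" if i: "i < m" for i
  proof -
    have "1 < 1 / rho i" using rho0[OF i] rho1[OF i] by simp
    then have "0 \<le> 1 / rho i - rho i" using rho1[OF i] by simp
    then show ?thesis unfolding kap_def using rpos[OF i] tpos[OF i] by simp
  qed
  have w_nn: "0 \<le> r i^2 * (1 - rho i)" if i: "i < m" for i using rho1[OF i] by simp
  have dB: "0 \<le> delta*B" using delta_pos Bpos by simp
  have Phi_nn: "0 \<le> Phi k" for k
  proof -
    have "0 \<le> V k" unfolding V_def
      by (intro add_nonneg_nonneg sum_nonneg mult_nonneg_nonneg)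
         (use alpha_pos beta_pos delta_pos Bpos in \<open>auto intro: less_imp_le\<close>)
    moreover have "0 \<le> (\<Sum>i<m. alpha i * (a i * (norm (E k i))^2 + beta i * (norm (u k i - z k))^2))"
      by (intro sum_nonneg mult_nonneg_nonneg add_nonneg_nonneg)
         (use alpha_pos beta_pos a_nn in \<open>auto intro: less_imp_le\<close>)
    ultimately show ?thesis unfolding Phi_def by simp
  qed
  have T_nn: "0 \<le> alpha i * (r i^2 * (1 - rho i) * (norm (u (Suc k) i - zs))^2 + kap i * (norm (E k i))^2)"
    if i: "i < m" for i k
    using alpha_pos[OF i] w_nn[OF i] kap_nn[OF i] rho1[OF i] by (intro mult_nonneg_nonneg add_nonneg_nonneg) auto
  have D_nn: "0 \<le> D k" for k
    unfolding D_def using T_nn dB by (intro add_nonneg_nonneg sum_nonneg) auto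
  have Dlim: "D \<longlonglongrightarrow> 0" using key Phi_nn D_nn by (rule lyap_to_zero)
  have T_le: "alpha i * (r i^2 * (1 - rho i) * (norm (u (Suc k) i - zs))^2 + kap i * (norm (E k i))^2) \<le> D k"
    if i: "i < m" for i k
  proof -
    have "alpha i * (r i^2 * (1 - rho i) * (norm (u (Suc k) i - zs))^2 + kap i * (norm (E k i))^2)
      \<le> (\<Sum>j<m. alpha j * (r j^2 * (1 - rho j) * (norm (u (Suc k) j - zs))^2 + kap j * (norm (E k j))^2))"
      by (rule member_le_sum) (use i T_nn in auto)
    moreover have "0 \<le> delta * B * (norm (z (Suc k) - z k))^2" using dB by simp
    ultimately show ?thesis unfolding D_def by linarith
  qed
  have uconv: "(\<lambda>k. u (Suc k) i) \<longlonglongrightarrow> zs" if i: "i < m" for i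
  proof -
    have wpos: "0 < alpha i * (r i^2 * (1 - rho i))" using alpha_pos[OF i] rpos[OF i] rho1[OF i] by simp
    have "(\<lambda>k. u (Suc k) i - zs) \<longlonglongrightarrow> 0"
    proof (rule sq_to_zero[OF wpos _ Dlim])
      fix k
      have "0 \<le> alpha i * (kap i * (norm (E k i))^2)" using alpha_pos[OF i] kap_nn[OF i] by simp
      then show "alpha i * (r i^2 * (1 - rho i)) * (norm (u (Suc k) i - zs))^2 \<le> D k"
        using T_le[OF i, of k] by (simp add: algebra_simps)
    qed
    then show ?thesis by (rule LIM_zero_cancel)
  qed
  have Econv: "(\<lambda>k. E k i) \<longlonglongrightarrow> 0" if i: "i < m" for i
  proof -
    have "kap i > 0"
    proof -
      have "1 < 1 / rho i" using rho0[OF i] rho1[OF i] by simp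
      then have "0 < 1 / rho i - rho i" using rho1[OF i] by simp
      then show ?thesis unfolding kap_def using rpos[OF i] tpos[OF i] by simp
    qed
    then have wpos: "0 < alpha i * kap i" using alpha_pos[OF i] by simp
    show ?thesis
    proof (rule sq_to_zero[OF wpos _ Dlim])
      fix k
      have "0 \<le> alpha i * (r i^2 * (1 - rho i) * (norm (u (Suc k) i - zs))^2)" using alpha_pos[OF i] w_nn[OF i] by simp
      then show "alpha i * kap i * (norm (E k i))^2 \<le> D k"
        using T_le[OF i, of k] by (simp add: algebra_simps)
    qed
  qed
  have zdiff: "(\<lambda>k. z (Suc k) - z k) \<longlonglongrightarrow> 0"
  proof -
    have wpos: "0 < delta*B" using delta_pos Bpos by simp
    show ?thesis
    proof (rule sq_to_zero[OF wpos _ Dlim])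
      fix k
      have "0 \<le> (\<Sum>i<m. alpha i * (r i^2 * (1 - rho i) * (norm (u (Suc k) i - zs))^2 + kap i * (norm (E k i))^2))"
        using T_nn by (intro sum_nonneg) auto
      then show "delta*B * (norm (z (Suc k) - z k))^2 \<le> D k" unfolding D_def by simp
    qed
  qed
  have u_lim: "(\<lambda>k. u k i) \<longlonglongrightarrow> zs" if i: "i < m" for i
    using uconv[OF i] by (rule LIMSEQ_imp_Suc)
  have lam_lim: "(\<lambda>k. lam k i) \<longlonglongrightarrow> grad i zs" if i: "i < m" for i
  proof -
    have "(\<lambda>k. grad i (u k i) - g i) \<longlonglongrightarrow> 0"
    proof (rule Lim_null_comparison)
      show "\<forall>\<^sub>F k in sequentially. norm (grad i (u k i) - g i) \<le> s i * norm (u k i - zs)"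
        unfolding g_def using lipschitz[OF i] by simp
      have "(\<lambda>k. u k i - zs) \<longlonglongrightarrow> 0" using u_lim[OF i] by (rule LIM_zero)
      then have "(\<lambda>k. norm (u k i - zs)) \<longlonglongrightarrow> 0" by (rule tendsto_norm_zero)
      then have "(\<lambda>k. s i * norm (u k i - zs)) \<longlonglongrightarrow> s i * 0" by (intro tendsto_mult tendsto_const)
      then show "(\<lambda>k. s i * norm (u k i - zs)) \<longlonglongrightarrow> 0" by simp
    qed
    then have "(\<lambda>k. (grad i (u k i) - g i) - E k i) \<longlonglongrightarrow> 0 - 0" using Econv[OF i] by (rule tendsto_diff)
    then have "(\<lambda>k. lam k i - g i) \<longlonglongrightarrow> 0" by (simp add: E_def)
    then show ?thesis unfolding g_def by (rule LIM_zero_cancel)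
  qed
  have z_lim: "z \<longlonglongrightarrow> zs"
  proof -
    define S where "S k = (\<Sum>i<m. alpha i *\<^sub>R (beta i *\<^sub>R u (Suc k) i - lam (Suc k) i))" for k
    have zeq: "z (Suc k) = (1/B) *\<^sub>R S k + delta *\<^sub>R (z k - z (Suc k))" for k
    proof -
      have "(1+delta) *\<^sub>R z (Suc k) = (1+delta) *\<^sub>R ((1/(1+delta)) *\<^sub>R ((1/B) *\<^sub>R S k) + (delta/(1+delta)) *\<^sub>R z k)"
        using z_upd[of k] unfolding S_def B_def by simp
      also have "\<dots> = (1/B) *\<^sub>R S k + delta *\<^sub>R z k" using delta_pos by (simp add: scaleR_add_right)
      finally have "(1+delta) *\<^sub>R z (Suc k) = (1/B) *\<^sub>R S k + delta *\<^sub>R z k" .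
      then show ?thesis by (simp add: algebra_simps)
    qed
    have "S \<longlonglongrightarrow> (\<Sum>i<m. alpha i *\<^sub>R (beta i *\<^sub>R zs - g i))"
      unfolding S_def
    proof (intro tendsto_sum tendsto_scaleR tendsto_diff tendsto_const)
      fix i assume "i \<in> {..<m}"
      then have i: "i < m" by simp
      show "(\<lambda>k. u (Suc k) i) \<longlonglongrightarrow> zs" by (rule uconv[OF i])
      show "(\<lambda>k. lam (Suc k) i) \<longlonglongrightarrow> g i" unfolding g_def using lam_lim[OF i] by (rule LIMSEQ_Suc)
    qed
    also have "(\<Sum>i<m. alpha i *\<^sub>R (beta i *\<^sub>R zs - g i)) = B *\<^sub>R zs"
    proof -
      have "(\<Sum>i<m. alpha i *\<^sub>R (beta i *\<^sub>R zs - g i)) = (\<Sum>i<m. (alpha i * beta i) *\<^sub>R zs) - (\<Sum>i<m. alpha i *\<^sub>R g i)"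
        by (simp add: sum_subtractf scaleR_diff_right)
      also have "\<dots> = B *\<^sub>R zs" using gsum unfolding B_def by (simp add: scaleR_sum_left)
      finally show ?thesis .
    qed
    finally have Sl: "S \<longlonglongrightarrow> B *\<^sub>R zs" .
    have "(\<lambda>k. (1/B) *\<^sub>R S k + delta *\<^sub>R (z k - z (Suc k))) \<longlonglongrightarrow> (1/B) *\<^sub>R (B *\<^sub>R zs) + delta *\<^sub>R 0"
    proof (intro tendsto_add tendsto_scaleR tendsto_const Sl)
      have "(\<lambda>k. - (z (Suc k) - z k)) \<longlonglongrightarrow> - 0" using zdiff by (rule tendsto_minus)
      then show "(\<lambda>k. z k - z (Suc k)) \<longlonglongrightarrow> 0" by simp
    qed
    then have "(\<lambda>k. z (Suc k)) \<longlonglongrightarrow> zs" using Bpos by (simp add: zeq[symmetric])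
    then show ?thesis by (rule LIMSEQ_imp_Suc)
  qed
  show ?thesis
  proof (intro allI impI conjI)
    fix i assume i: "i < m"
    have err1: "admm_err grad beta lam z k i (u (Suc k) i) = E (Suc k) i" for k
      unfolding admm_err_def E_def using lam_upd[OF i, of k] by (simp add: algebra_simps)
    have "(\<lambda>k. norm (E (Suc k) i)) \<longlonglongrightarrow> 0"
      using LIMSEQ_Suc[OF Econv[OF i]] by (rule tendsto_norm_zero)
    then show "(\<lambda>k. norm (admm_err grad beta lam z k i (u (Suc k) i))) \<longlonglongrightarrow> 0" by (simp add: err1)
    show "(\<lambda>k. u k i) \<longlonglongrightarrow> zs" by (rule u_lim[OF i])
    show "(\<lambda>k. lam k i) \<longlonglongrightarrow> grad i zs" by (rule lam_lim[OF i])
    show "z \<longlonglongrightarrow> zs" by (rule z_lim)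
  qed
qed

end
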